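(* Let $r\geq 2$ and let $X$ be a rose with $r$ petals, with $F\cong\pi_1(X,x_0)$ the free group on the generators $\alpha_1,\ldots,\alpha_r$ corresponding to the oriented petals. Let $Z$ be a finite, non-empty, connected graph and let $Z\to X$ be an immersion that is not a covering map. Then the immersion factors as $Z\hookrightarrow Y\to X$, where $Z$ is a subgraph of $Y$, $Y$ is a finite connected graph, $Y\to X$ is a finite-sheeted (combinatorial) covering map, and the image of the resulting homomorphism $F\to\mathrm{Sym}(V(Y))$ (given by the action of $F$ on the vertex set $V(Y)$ of $Y$ by path lifting) is the full symmetric group $\mathrm{Sym}(V(Y))$.
   Context: A rose with $r$ petals is a graph with exactly one vertex $x_0$ and $r$ edges; each edge is oriented and labelled by a generator $\alpha_i$, giving $\pi_1(X,x_0)\cong F$ free on $\alpha_1,\dots,\alpha_r$. A combinatorial map of graphs $Y\to X$ (sending vertices to vertices and edges to edges) is equivalent to an orientation and labelling of the edges of $Y$ by $\alpha_1,\ldots,\alpha_r$. It is an immersion if it is injective on links of vertices, equivalently if at every vertex of $Y$ and for every label $\alpha_i$ there is at most one incoming and at most one outgoing edge labelled $\alpha_i$; it is a covering map if it is bijective on links of vertices, equivalently if at every vertex there is exactly one incoming and exactly one outgoing edge labelled $\alpha_i$ for each $i$. For a covering $Y\to X$, $F$ acts on the vertices of $Y$ by path lifting: for a vertex $y$ and $\gamma\in F$ viewed as a loop at $x_0$, $\gamma.y$ is the endpoint of the unique lift of $\gamma$ starting at $y$; concretely, $\alpha_i$ sends $u$ to $v$ when there is an edge labelled $\alpha_i$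 oriented from $u$ to $v$. *)

theory Defs
  imports Main "HOL-Algebra.Bij" "HOL-Algebra.Generated_Groups"
begin

text \<open>A graph over the rose with r petals: a graph with oriented edges, each
  labelled by a generator index in {..<r} (label i stands for alpha_(i+1)).
  Such a labelling is the same as a combinatorial map to the rose X.\<close>

record ('v, 'e) lgraph =
  verts :: "'v set"
  arcs  :: "'e set"
  tail  :: "'e \<Rightarrow> 'v"
  head  :: "'e \<Rightarrow> 'v"
  lab   :: "'e \<Rightarrow> nat"

definition wf_lgraph :: "nat \<Rightarrow> ('v, 'e) lgraph \<Rightarrow> bool" where
  "wf_lgraph r G \<longleftrightarrow>
     (\<forall>e\<in>arcs G. tail G e \<in> verts G \<and> head G e \<in> verts G \<and> lab G e < r)"

definition finite_lgraph :: "('v, 'e) lgraph \<Rightarrow> bool" where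
  "finite_lgraph G \<longleftrightarrow> finite (verts G) \<and> finite (arcs G)"

definition adj :: "('v, 'e) lgraph \<Rightarrow> ('v \<times> 'v) set" where
  "adj G = {(tail G e, head G e) | e. e \<in> arcs G} \<union> {(head G e, tail G e) | e. e \<in> arcs G}"

definition connected_lgraph :: "('v, 'e) lgraph \<Rightarrow> bool" where
  "connected_lgraph G \<longleftrightarrow> (\<forall>u\<in>verts G. \<forall>v\<in>verts G. (u, v) \<in> (adj G)\<^sup>*)"

definition immersion :: "nat \<Rightarrow> ('v, 'e) lgraph \<Rightarrow> bool" where
  "immersion r G \<longleftrightarrow> (\<forall>v\<in>verts G. \<forall>i<r.
     (\<forall>e\<in>arcs G. \<forall>e'\<in>arcs G. tail G e = v \<and> tail G e' = v \<and> lab G e = i \<and> lab G e' = i \<longrightarrow> e = e') \<and>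
     (\<forall>e\<in>arcs G. \<forall>e'\<in>arcs G. head G e = v \<and> head G e' = v \<and> lab G e = i \<and> lab G e' = i \<longrightarrow> e = e'))"

definition covering :: "nat \<Rightarrow> ('v, 'e) lgraph \<Rightarrow> bool" where
  "covering r G \<longleftrightarrow> (\<forall>v\<in>verts G. \<forall>i<r.
     (\<exists>!e. e \<in> arcs G \<and> tail G e = v \<and> lab G e = i) \<and>
     (\<exists>!e. e \<in> arcs G \<and> head G e = v \<and> lab G e = i))"

text \<open>Z is (identified with) a subgraph of Y: an injective, label-preserving
  combinatorial graph map Z \<rightarrow> Y commuting with the maps to X.\<close>
definition subgraph_embedding ::
  "('v, 'e) lgraph \<Rightarrow> ('w, 'f) lgraph \<Rightarrow> ('v \<Rightarrow> 'w) \<Rightarrow> ('e \<Rightarrow> 'f) \<Rightarrow> bool" where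
  "subgraph_embedding Z Y fv fe \<longleftrightarrow>
     inj_on fv (verts Z) \<and> inj_on fe (arcs Z) \<and>
     fv ` verts Z \<subseteq> verts Y \<and> fe ` arcs Z \<subseteq> arcs Y \<and>
     (\<forall>e\<in>arcs Z. tail Y (fe e) = fv (tail Z e) \<and> head Y (fe e) = fv (head Z e)
                 \<and> lab Y (fe e) = lab Z e)"

text \<open>Action of the generator alpha_(i+1) on the vertices of a covering by path
  lifting: u is sent to the head of the unique edge labelled i leaving u.\<close>
definition gen_perm :: "('v, 'e) lgraph \<Rightarrow> nat \<Rightarrow> 'v \<Rightarrow> 'v" where
  "gen_perm Y i = (\<lambda>u\<in>verts Y. head Y (THE e. e \<in> arcs Y \<and> tail Y e = u \<and> lab Y e = i))"

text \<open>Image of F \<rightarrow> Sym(V(Y)): the subgroup of Sym(V(Y)) generated by the images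
  of the free generators.\<close>
definition monodromy_image :: "nat \<Rightarrow> ('v, 'e) lgraph \<Rightarrow> ('v \<Rightarrow> 'v) set" where
  "monodromy_image r Y = generate (BijGroup (verts Y)) (gen_perm Y ` {..<r})"

end

theory Submission
  imports Defs "HOL-Combinatorics.Cycles"
begin


abbreviation pinv :: "('a \<Rightarrow> 'b) \<Rightarrow> 'b \<Rightarrow> 'a" where "pinv f \<equiv> inv_into UNIV f"

locale pg =
  fixes V :: "'a set" and H :: "('a \<Rightarrow> 'a) set"
  assumes finV: "finite V" and subH: "subgroup H (BijGroup V)"
begin

definition inH :: "('a \<Rightarrow> 'a) \<Rightarrow> bool" where
  "inH p \<longleftrightarrow> restrict p V \<in> H"

lemma H_Bij: "f \<in> H \<Longrightarrow> f \<in> Bij V"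
  using subgroup.subset[OF subH] by (auto simp: BijGroup_def)

lemma inH_id: "inH id"
proof -
  have "one (BijGroup V) \<in> H" using subgroup.one_closed[OF subH] .
  moreover have "one (BijGroup V) = restrict id V" by (auto simp: BijGroup_def id_def)
  ultimately show ?thesis by (simp add: inH_def)
qed

lemma inH_maps: "inH p \<Longrightarrow> x \<in> V \<Longrightarrow> p x \<in> V"
proof -
  assume a: "inH p" "x \<in> V"
  then have "restrict p V \<in> Bij V" using H_Bij by (auto simp: inH_def)
  then have "restrict p V x \<in> V" using a(2) by (auto simp: Bij_def bij_betw_def)
  then show "p x \<in> V" using a(2) by simp
qed

lemma inH_comp: assumes "inH p" "inH q" shows "inH (p \<circ> q)"
proof -
  have m: "restrict p V \<otimes>\<^bsub>BijGroup V\<^esub> restrict q V \<in> H"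
    using assms subgroup.m_closed[OF subH] by (auto simp: inH_def)
  have "restrict p V \<otimes>\<^bsub>BijGroup V\<^esub> restrict q V = restrict (p \<circ> q) V"
    using assms H_Bij inH_maps[OF assms(2)] by (auto simp: BijGroup_def inH_def compose_def)
  with m show ?thesis by (simp add: inH_def)
qed

lemma inH_inv: assumes "inH p" "p permutes V" shows "inH (pinv p)"
proof -
  have B: "restrict p V \<in> Bij V" using assms H_Bij by (auto simp: inH_def)
  have m: "m_inv (BijGroup V) (restrict p V) \<in> H"
    using assms subgroup.m_inv_closed[OF subH] by (auto simp: inH_def)
  have "m_inv (BijGroup V) (restrict p V) = restrict (pinv p) V"
  proof
    fix y show "m_inv (BijGroup V) (restrict p V) y = restrict (pinv p) V y"
    proof (cases "y \<in> V")
      case True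
      have "pinv p y \<in> V" using True assms(2) by (simp add: permutes_inv permutes_in_image)
      moreover have "p (pinv p y) = y" using assms(2) by (simp add: permutes_inverses)
      ultimately have "inv_into V (restrict p V) y = pinv p y"
        using B by (intro inv_into_f_eq) (auto simp: Bij_def bij_betw_def)
      then show ?thesis using True by (simp add: inv_BijGroup[OF B])
    qed (simp add: inv_BijGroup[OF B])
  qed
  with m show ?thesis by (simp add: inH_def)
qed

lemma inH_funpow: assumes "inH p" shows "inH (p ^^ t)"
proof (induct t)
  case 0 then show ?case using inH_id by (simp add: id_def)
next
  case (Suc t) then show ?case using inH_comp[OF assms Suc] by (simp only: funpow.simps(2))
qed

end

definition cyc3 :: "'a \<Rightarrow> 'a \<Rightarrow> 'a \<Rightarrow> 'a \<Rightarrow> 'a" where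
  "cyc3 a b c = (\<lambda>x. if x = a then b else if x = b then c else if x = c then a else x)"

lemma cyc3_conj: assumes "bij g" shows "g \<circ> cyc3 a b c \<circ> pinv g = cyc3 (g a) (g b) (g c)"
proof
  fix x
  obtain w where w: "x = g w" using assms by (metis bij_pointE)
  have i: "pinv g (g w) = w" using assms by (simp add: bij_is_inj)
  have e: "\<And>z. (g w = g z) = (w = z)" using assms by (metis bij_is_inj injD)
  show "(g \<circ> cyc3 a b c \<circ> pinv g) x = cyc3 (g a) (g b) (g c) x"
    unfolding w by (simp add: i e cyc3_def)
qed

lemma cyc3_sq: "distinct [a,b,c] \<Longrightarrow> cyc3 a b c \<circ> cyc3 a b c = cyc3 a c b"
  by (auto simp: cyc3_def fun_eq_iff)

lemma cyc3_rot: "distinct [a,b,c] \<Longrightarrow> cyc3 a b c = cyc3 b c a"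
  by (auto simp: cyc3_def fun_eq_iff)

lemma cyc3_permutes: assumes "a \<in> S" "b \<in> S" "c \<in> S" "distinct [a,b,c]" shows "cyc3 a b c permutes S"
proof (rule bij_imp_permutes)
  have 3: "\<And>x. cyc3 a b c (cyc3 a b c (cyc3 a b c x)) = x" using assms(4) by (auto simp: cyc3_def)
  show "bij_betw (cyc3 a b c) S S"
  proof (rule bij_betw_byWitness[where f'="\<lambda>x. cyc3 a b c (cyc3 a b c x)"])
    show "\<forall>x\<in>S. cyc3 a b c (cyc3 a b c (cyc3 a b c x)) = x" using 3 by simp
    show "\<forall>x\<in>S. cyc3 a b c (cyc3 a b c (cyc3 a b c x)) = x" using 3 by simp
    show "cyc3 a b c ` S \<subseteq> S" using assms by (auto simp: cyc3_def)
    show "(\<lambda>x. cyc3 a b c (cyc3 a b c x)) ` S \<subseteq> S" using assms by (auto simp: cyc3_def)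
  qed
  show "\<And>x. x \<notin> S \<Longrightarrow> cyc3 a b c x = x" using assms by (auto simp: cyc3_def)
qed

context pg begin

definition A3 :: "'a set \<Rightarrow> bool" where
  "A3 S \<longleftrightarrow> (\<forall>a\<in>S. \<forall>b\<in>S. \<forall>c\<in>S. distinct [a,b,c] \<longrightarrow> inH (cyc3 a b c))"

lemma inH_conj: assumes "inH g" "g permutes V" "inH t" shows "inH (g \<circ> t \<circ> pinv g)"
  using assms by (intro inH_comp inH_inv) auto

lemma conj_cyc3: assumes "inH g" "g permutes V" "inH (cyc3 a b c)"
  shows "inH (cyc3 (g a) (g b) (g c))"
  using inH_conj[OF assms] cyc3_conj[of g a b c] assms(2) by (simp add: permutes_bij)

lemma A3_conj: assumes "inH g" "g permutes V" "A3 S" shows "A3 (g ` S)"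
  unfolding A3_def
proof (intro ballI impI)
  fix a b c assume "a \<in> g ` S" "b \<in> g ` S" "c \<in> g ` S" "distinct [a, b, c]"
  then obtain a' b' c' where "a' \<in> S" "b' \<in> S" "c' \<in> S" "a = g a'" "b = g b'" "c = g c'" by blast
  moreover have "distinct [a',b',c']" using \<open>distinct [a,b,c]\<close> calculation by auto
  ultimately show "inH (cyc3 a b c)" using conj_cyc3[OF assms(1,2)] assms(3) unfolding A3_def by blast
qed

lemma cyc3_inH_sq: assumes "inH (cyc3 a b c)" "distinct [a,b,c]" shows "inH (cyc3 a c b)"
  using inH_comp[OF assms(1) assms(1)] cyc3_sq[OF assms(2)] by simp

lemma A3_ext:
  assumes A: "A3 S" and SV: "S \<subseteq> V" and uv: "u \<in> S" "v \<in> S" "u \<noteq> v" and y: "y \<in> V" "y \<notin> S"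
    and t: "inH (cyc3 y u v)"
  shows "A3 (insert y S)"
proof -
  have cS: "\<And>a b c. a \<in> S \<Longrightarrow> b \<in> S \<Longrightarrow> c \<in> S \<Longrightarrow> distinct [a,b,c] \<Longrightarrow> inH (cyc3 a b c) \<and> cyc3 a b c permutes V"
  proof -
    fix a b c assume "a \<in> S" "b \<in> S" "c \<in> S" "distinct [a,b,c]"
    then show "inH (cyc3 a b c) \<and> cyc3 a b c permutes V"
      using A SV cyc3_permutes[of a V b c] unfolding A3_def by blast
  qed
  have cj: "inH (cyc3 y (\<sigma> u) (\<sigma> v))" if "inH \<sigma>" "\<sigma> permutes V" "\<sigma> y = y" for \<sigma>
    using conj_cyc3[OF that(1,2) t] that(3) by simp
  have key: "inH (cyc3 y p q)" if pq: "p \<in> S" "q \<in> S" "p \<noteq> q" for p q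
  proof -
    have yd: "y \<noteq> p" "y \<noteq> q" "y \<noteq> u" "y \<noteq> v" using pq uv y by auto
    have fy: "\<And>a b c. a \<in> S \<Longrightarrow> b \<in> S \<Longrightarrow> c \<in> S \<Longrightarrow> cyc3 a b c y = y" using y by (auto simp: cyc3_def)
    consider "p = u" "q = v" | "p = v" "q = u" | "p = u" "q \<noteq> v" | "p = v" "q \<noteq> u"
      | "q = u" "p \<noteq> v" | "q = v" "p \<noteq> u" | "p \<noteq> u" "p \<noteq> v" "q \<noteq> u" "q \<noteq> v"
      using pq by blast
    then show ?thesis
    proof cases
      case 1 then show ?thesis using t by simp
    next
      case 2 then show ?thesis using cyc3_inH_sq[OF t] yd uv by simp
    next
      case 3
      have "inH (cyc3 y q u)" using cj[of "cyc3 v u q"] cS[of v u q] fy[of v u q] 3 uv pq yd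
        by (simp add: cyc3_def)
      then show ?thesis using cyc3_inH_sq[of y q u] 3 yd pq by simp
    next
      case 4
      show ?thesis using cj[of "cyc3 u v q"] cS[of u v q] fy[of u v q] 4 uv pq yd
        by (simp add: cyc3_def)
    next
      case 5
      show ?thesis using cj[of "cyc3 v u p"] cS[of v u p] fy[of v u p] 5 uv pq yd
        by (simp add: cyc3_def)
    next
      case 6
      have "inH (cyc3 y v p)" using cj[of "cyc3 u v p"] cS[of u v p] fy[of u v p] 6 uv pq yd
        by (simp add: cyc3_def)
      then show ?thesis using cyc3_inH_sq[of y v p] 6 yd pq by simp
    next
      case 7
      let ?s = "cyc3 u q v \<circ> cyc3 u p v"
      have "inH ?s" using cS[of u q v] cS[of u p v] 7 uv pq by (intro inH_comp) auto
      moreover have "?s permutes V" using cS[of u q v] cS[of u p v] 7 uv pq by (intro permutes_compose) auto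
      moreover have "?s y = y" using fy[of u p v] fy[of u q v] uv pq by simp
      ultimately have "inH (cyc3 y (?s u) (?s v))" by (rule cj)
      moreover have "?s u = p" "?s v = q" using 7 uv pq by (auto simp: cyc3_def)
      ultimately show ?thesis by simp
    qed
  qed
  show ?thesis unfolding A3_def
  proof (intro ballI impI)
    fix a b c assume abc: "a \<in> insert y S" "b \<in> insert y S" "c \<in> insert y S" "distinct [a, b, c]"
    show "inH (cyc3 a b c)"
    proof (cases "a = y")
      case True then show ?thesis using key[of b c] abc by auto
    next
      case na: False
      show ?thesis
      proof (cases "b = y")
        case True then show ?thesis using key[of c a] abc na cyc3_rot[of a b c] by auto
      next
        case nb: False
        show ?thesis
        proof (cases "c = y")
          case True then show ?thesis using key[of a b] abc na nb cyc3_rot[of a b c] cyc3_rot[of b c a] by auto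
        next
          case False then show ?thesis using A abc na nb unfolding A3_def by auto
        qed
      qed
    qed
  qed
qed

lemma A3_union:
  assumes "A3 S" "A3 T" "S \<subseteq> V" "T \<subseteq> V" "u \<in> S" "v \<in> S" "u \<in> T" "v \<in> T" "u \<noteq> v"
  shows "A3 (S \<union> T)"
proof -
  have fT: "finite T" using assms(4) finV finite_subset by blast
  have "A3 (S \<union> F)" if "F \<subseteq> T" for F
    using finite_subset[OF that fT] that
  proof (induct F rule: finite_induct)
    case empty then show ?case using assms by simp
  next
    case (insert y F)
    show ?case
    proof (cases "y \<in> S \<union> F")
      case True then show ?thesis using insert by (simp add: insert_absorb)
    next
      case False
      have yuv: "y \<noteq> u" "y \<noteq> v" using False assms(5,6) by auto
      have "inH (cyc3 y u v)" using assms(2) insert(4) yuv assms(7-9) unfolding A3_def by auto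
      moreover have "y \<in> V" using insert(4) assms(4) by auto
      ultimately have "A3 (insert y (S \<union> F))"
        using A3_ext[of "S \<union> F" u v y] insert assms False by auto
      then show ?thesis by simp
    qed
  qed
  then show ?thesis by simp
qed


lemma tt_eq3: "distinct [a,b,d] \<Longrightarrow> Transposition.transpose a b \<circ> Transposition.transpose a d = cyc3 a d b"
  by (auto simp: fun_eq_iff Transposition.transpose_def cyc3_def)

lemma tt_eq4: "distinct [a,b,c,d] \<Longrightarrow> Transposition.transpose a b \<circ> Transposition.transpose c d = cyc3 b c a \<circ> cyc3 c d b"
  by (auto simp: fun_eq_iff Transposition.transpose_def cyc3_def)

lemma tt_inH: assumes A: "A3 V" and abcd: "a \<in> V" "b \<in> V" "c \<in> V" "d \<in> V" "a \<noteq> b" "c \<noteq> d"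
  shows "inH (Transposition.transpose a b \<circ> Transposition.transpose c d)"
proof -
  have C: "inH (cyc3 x y z)" if "x \<in> V" "y \<in> V" "z \<in> V" "distinct [x,y,z]" for x y z
    using A that unfolding A3_def by blast
  have sw: "Transposition.transpose x y = Transposition.transpose y x" for x y :: 'a
    by (rule transpose_commute)
  consider "a = c" "b = d" | "a = d" "b = c" | "a = c" "b \<noteq> d" | "a = d" "b \<noteq> c"
    | "b = c" "a \<noteq> d" | "b = d" "a \<noteq> c" | "distinct [a,b,c,d]"
    using abcd by auto
  then show ?thesis
  proof cases
    case 1 then show ?thesis using inH_id by (simp add: id_def)
  next
    case 2 then show ?thesis using inH_id by (simp add: transpose_commute id_def)
  next
    case 3 then show ?thesis using tt_eq3[of a b d] C[of a d b] abcd by simp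
  next
    case 4 then show ?thesis using tt_eq3[of a b c] C[of a c b] abcd sw[of c d] by simp
  next
    case 5 then show ?thesis using tt_eq3[of b a d] C[of b d a] abcd sw[of a b] by simp
  next
    case 6 then show ?thesis using tt_eq3[of b a c] C[of b c a] abcd sw[of a b] sw[of c d] by simp
  next
    case 7 then show ?thesis using tt_eq4[of a b c d] C[of b c a] C[of c d b] abcd inH_comp by (simp add: eq_commute)
  qed
qed

lemma even_inH: assumes A: "A3 V" and p: "p permutes V"
  shows "(evenperm p \<longrightarrow> inH p) \<and> (\<not> evenperm p \<longrightarrow> (\<forall>c\<in>V. \<forall>d\<in>V. c \<noteq> d \<longrightarrow> inH (Transposition.transpose c d \<circ> p)))"
  using p finV
proof (induct rule: permutes_induct)
  case id then show ?case using inH_id by (simp add: id_def)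
next
  case (swap a b p)
  have pp: "permutation p" using swap(5) finV permutation_permutes by blast
  have ev: "evenperm (Transposition.transpose a b \<circ> p) = (\<not> evenperm p)"
    using evenperm_comp[OF permutation_swap_id pp, of a b] evenperm_swap[of a b] swap(3) by simp
  show ?case
  proof (cases "evenperm p")
    case True
    have "inH ((Transposition.transpose c d \<circ> Transposition.transpose a b) \<circ> p)"
      if "c \<in> V" "d \<in> V" "c \<noteq> d" for c d
      using inH_comp[OF tt_inH[OF A that(1,2) swap(1,2) that(3) swap(3)]] swap(4) True by auto
    then have "\<forall>c\<in>V. \<forall>d\<in>V. c \<noteq> d \<longrightarrow> inH (Transposition.transpose c d \<circ> (Transposition.transpose a b \<circ> p))"
      by (simp add: comp_assoc)
    with ev True show ?thesis by blast
  next
    case False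
    then have "inH (Transposition.transpose a b \<circ> p)" using swap(4) swap(1-3) by blast
    moreover have "evenperm (Transposition.transpose a b \<circ> p)" using ev False by simp
    ultimately show ?thesis by blast
  qed
qed

lemma all_inH: assumes A: "A3 V" and o: "inH ob" "ob permutes V" "\<not> evenperm ob" and p: "p permutes V"
  shows "inH p"
proof (cases "evenperm p")
  case True then show ?thesis using even_inH[OF A p] by simp
next
  case False
  have pp: "permutation p" "permutation ob" using p o finV permutation_permutes by blast+
  have "evenperm (p \<circ> pinv ob)"
    using evenperm_comp[OF pp(1) permutation_inverse[OF pp(2)]] evenperm_inv[OF pp(2)] False o(3) by simp
  moreover have "(p \<circ> pinv ob) permutes V" using p o(2) by (simp add: permutes_compose permutes_inv)
  ultimately have "inH (p \<circ> pinv ob)" using even_inH[OF A] by blast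
  then have "inH ((p \<circ> pinv ob) \<circ> ob)" using o(1) inH_comp by blast
  moreover have "(p \<circ> pinv ob) \<circ> ob = p" using permutes_inv_o(2)[OF o(2)] by (simp add: comp_assoc)
  ultimately show ?thesis by simp
qed

lemma H_full: assumes "\<And>p. p permutes V \<Longrightarrow> inH p" shows "carrier (BijGroup V) \<subseteq> H"
proof
  fix f assume "f \<in> carrier (BijGroup V)"
  then have f: "f \<in> Bij V" by (simp add: BijGroup_def)
  let ?p = "\<lambda>x. if x \<in> V then f x else x"
  have "bij_betw ?p V V" using f unfolding Bij_def by (auto intro: bij_betw_cong[THEN iffD1])
  then have "?p permutes V" by (rule bij_imp_permutes) auto
  then have "restrict ?p V \<in> H" using assms inH_def by blast
  moreover have "restrict ?p V = f" using f unfolding Bij_def by (auto simp: extensional_def fun_eq_iff)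
  ultimately show "f \<in> H" by simp
qed

end

lemma commutator_cyc3:
  assumes g: "bij g" and h: "bij h" and gx: "g x \<noteq> x" and hx: "h x \<noteq> x"
    and sep: "\<And>y. y \<noteq> x \<Longrightarrow> g y = y \<or> h y = y"
  shows "g \<circ> h \<circ> pinv g \<circ> pinv h = cyc3 x (g x) (h x)"
proof
  fix z
  have gi1: "\<And>y. g (pinv g y) = y" using g by (simp add: bij_is_surj surj_f_inv_f)
  have gi2: "\<And>y. pinv g (g y) = y" using g by (simp add: bij_is_inj)
  have hi1: "\<And>y. h (pinv h y) = y" using h by (simp add: bij_is_surj surj_f_inv_f)
  have hi2: "\<And>y. pinv h (h y) = y" using h by (simp add: bij_is_inj)
  have gI: "\<And>a b. g a = g b \<Longrightarrow> a = b" using g by (metis gi2)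
  have hI: "\<And>a b. h a = h b \<Longrightarrow> a = b" using h by (metis hi2)
  have gfix: "\<And>y. g y = y \<Longrightarrow> pinv g y = y" using gi2 by metis
  have hfix: "\<And>y. h y = y \<Longrightarrow> pinv h y = y" using hi2 by metis
  have gxhx: "g x \<noteq> h x"
  proof
    assume e: "g x = h x"
    have "g x \<noteq> x" using gx .
    then have "g (g x) = g x \<or> h (g x) = g x" using sep by blast
    then show False using e gI hI gx hx by metis
  qed
  have hgx: "h (g x) = g x" using sep[of "g x"] gx gI by metis
  have ghx: "g (h x) = h x" using sep[of "h x"] hx hI by metis
  show "(g \<circ> h \<circ> pinv g \<circ> pinv h) z = cyc3 x (g x) (h x) z"
  proof (cases "z = x")
    case True
    let ?w = "pinv h x"
    have hw: "h ?w = x" by (rule hi1)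
    have wx: "?w \<noteq> x" using hw hx by auto
    have "g ?w = ?w" using sep[OF wx] hw wx by auto
    then have "pinv g ?w = ?w" by (rule gfix)
    then show ?thesis using True hw by (simp add: cyc3_def)
  next
    case zx: False
    show ?thesis
    proof (cases "z = h x")
      case True
      let ?u = "pinv g x"
      have gu: "g ?u = x" by (rule gi1)
      have ux: "?u \<noteq> x" using gu gx by auto
      have "h ?u = ?u" using sep[OF ux] gu ux by auto
      then show ?thesis using True gu hi2 zx gxhx by (simp add: cyc3_def)
    next
      case zhx: False
      show ?thesis
      proof (cases "z = g x")
        case True
        have "pinv h (g x) = g x" using hgx by (rule hfix)
        then show ?thesis using True gi2 ghx zx gxhx by (simp add: cyc3_def)
      next
        case zgx: False
        have r: "cyc3 x (g x) (h x) z = z" using zx zhx zgx by (simp add: cyc3_def)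
        show ?thesis
        proof (cases "h z = z")
          case True
          then have w: "pinv h z = z" by (rule hfix)
          show ?thesis
          proof (cases "g z = z")
            case True2: True
            then show ?thesis using w gfix[OF True2] True r by simp
          next
            case False
            let ?u = "pinv g z"
            have gu: "g ?u = z" by (rule gi1)
            have uz: "?u \<noteq> z" using gu False by auto
            have ux: "?u \<noteq> x" using gu zgx by auto
            have "h ?u = ?u" using sep[OF ux] gu uz by auto
            then show ?thesis using w gu r by simp
          qed
        next
          case False
          have gz: "g z = z" using sep[OF zx] False by auto
          let ?w = "pinv h z"
          have hw: "h ?w = z" by (rule hi1)
          have wz: "?w \<noteq> z" using hw False by auto
          have wx: "?w \<noteq> x" using hw zhx by auto
          have "g ?w = ?w" using sep[OF wx] hw wz by auto
          then have "pinv g ?w = ?w" by (rule gfix)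
          then show ?thesis using hw gz r by simp
        qed
      qed
    qed
  qed
qed

context pg begin

lemma grow:
  assumes A0: "A3 S0" and S0V: "S0 \<subseteq> V"
    and G: "\<And>g. g \<in> G \<Longrightarrow> inH g \<and> g permutes V"
    and two: "\<And>g. g \<in> G \<Longrightarrow> \<exists>u v. u \<in> S0 \<and> v \<in> S0 \<and> g u \<in> S0 \<and> g v \<in> S0 \<and> u \<noteq> v"
    and conn: "\<And>T. S0 \<subseteq> T \<Longrightarrow> T \<subseteq> V \<Longrightarrow> (\<And>g. g \<in> G \<Longrightarrow> g ` T \<subseteq> T) \<Longrightarrow> T = V"
  shows "A3 V"
proof -
  let ?P = "\<lambda>S. S0 \<subseteq> S \<and> S \<subseteq> V \<and> A3 S"
  have "\<exists>S. ?P S \<and> (\<forall>S'. ?P S' \<longrightarrow> card S' \<le> card S)"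
  proof (rule ex_has_greatest_nat[of ?P S0 card "Suc (card V)"])
    show "?P S0" using A0 S0V by simp
    show "\<forall>y. ?P y \<longrightarrow> card y < Suc (card V)" using finV by (auto simp: card_mono le_imp_less_Suc)
  qed
  then obtain S where S: "?P S" and mx: "\<And>S'. ?P S' \<Longrightarrow> card S' \<le> card S" by blast
  have fS: "finite S" using S finV finite_subset by blast
  have "g ` S \<subseteq> S" if gG: "g \<in> G" for g
  proof -
    have gi: "inH g" "g permutes V" using G[OF gG] by auto
    obtain u v where uv: "u \<in> S0" "v \<in> S0" "g u \<in> S0" "g v \<in> S0" "u \<noteq> v" using two[OF gG] by blast
    have A1: "A3 (g ` S)" using A3_conj[OF gi] S by blast
    have gSV: "g ` S \<subseteq> V" using S gi(2) permutes_image[OF gi(2)] by blast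
    have neq: "g u \<noteq> g v" using uv(5) gi(2) by (metis permutes_inj injD)
    have "A3 (S \<union> g ` S)"
      using A3_union[OF _ A1 _ gSV, where u="g u" and v="g v"] S uv neq by auto
    then have "?P (S \<union> g ` S)" using S gSV by auto
    then have "card (S \<union> g ` S) \<le> card S" by (rule mx)
    moreover have "finite (S \<union> g ` S)" using fS by simp
    ultimately have "S \<union> g ` S = S" using card_seteq[of "S \<union> g ` S" S] by auto
    then show ?thesis by blast
  qed
  then have "S = V" using conn S by blast
  then show ?thesis using S by simp
qed

end



definition pjf :: "nat \<Rightarrow> nat \<Rightarrow> nat \<Rightarrow> nat \<Rightarrow> (nat \<Rightarrow> nat) \<Rightarrow> bool \<Rightarrow> nat \<Rightarrow> nat" where
  "pjf n q a b Q e x = (if x < n then (if x = a then n + q else Q x)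
          else if x = n then n
          else if x < n + q then x + q
          else if x < n + 2*q - 1 then x - q + 1
          else if x = n + 2*q - 1 then (if e then n + 2*q else b)
          else if e \<and> x = n + 2*q then b
          else x)"

definition pkf :: "nat \<Rightarrow> nat \<Rightarrow> (nat \<Rightarrow> nat) \<Rightarrow> nat \<Rightarrow> nat" where
  "pkf n q Pk x = (if x < n then Pk x else if x < n + q then n + ((x - n + 1) mod q) else x)"

definition pof :: "nat \<Rightarrow> (nat \<Rightarrow> nat) \<Rightarrow> nat \<Rightarrow> nat" where
  "pof n Pf x = (if x < n then Pf x else x)"

lemma pjf_parity: assumes q: "q \<ge> 1" and b: "b < n" and Qp: "\<And>x. x < n \<Longrightarrow> x \<noteq> a \<Longrightarrow> Q x < n \<and> Q x \<noteq> b"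
  shows "pjf n q a b Q True = Transposition.transpose b (n + 2*q) \<circ> pjf n q a b Q False"
  (is "?L = ?R")
proof
  fix x
  show "?L x = ?R x"
  proof (cases "x = n + 2*q - 1 \<or> x = n + 2*q")
    case True then show ?thesis using q b by (auto simp: pjf_def)
  next
    case False
    have e: "?L x = pjf n q a b Q False x" using False unfolding pjf_def by simp
    have "pjf n q a b Q False x \<noteq> b \<and> pjf n q a b Q False x \<noteq> n + 2*q"
      using False q b Qp[of x] unfolding pjf_def by auto
    then show ?thesis using e by simp
  qed
qed

locale C =
  fixes n r j k a b q :: nat and e :: bool and P :: "nat \<Rightarrow> nat \<Rightarrow> nat" and Q :: "nat \<Rightarrow> nat"
  assumes r2: "r \<ge> 2" and jr: "j < r" and kr: "k < r" and jk: "j \<noteq> k"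
    and an: "a < n" and bn: "b < n" and q2: "q \<ge> 2"
    and Pperm: "\<And>i. P i permutes {..<n}"
    and Pk: "(P k ^^ (q - 1)) = id"
    and Qbij: "bij_betw Q ({..<n} - {a}) ({..<n} - {b})"
begin

definition N where "N = n + 2*q + (if e then 1 else 0)"
abbreviation V where "V \<equiv> {..<N}"
abbreviation pj where "pj \<equiv> pjf n q a b Q e"
abbreviation pk where "pk \<equiv> pkf n q (P k)"
definition pi :: "nat \<Rightarrow> nat \<Rightarrow> nat" where
  "pi i = (if i = j then pj else if i = k then pk else pof n (P i))"

lemma Q_props: "x < n \<Longrightarrow> x \<noteq> a \<Longrightarrow> Q x < n \<and> Q x \<noteq> b"
  using Qbij unfolding bij_betw_def by auto

lemma Q_inj: "x < n \<Longrightarrow> x \<noteq> a \<Longrightarrow> y < n \<Longrightarrow> y \<noteq> a \<Longrightarrow> Q x = Q y \<Longrightarrow> x = y"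
  using Qbij unfolding bij_betw_def inj_on_def by auto

lemma pj_a: "pj a = n + q" using an by (simp add: pjf_def)
lemma pj_old: "x < n \<Longrightarrow> x \<noteq> a \<Longrightarrow> pj x = Q x" by (simp add: pjf_def)
lemma pj_x0: "pj n = n" by (simp add: pjf_def)
lemma pj_xi: "n < x \<Longrightarrow> x < n + q \<Longrightarrow> pj x = x + q" by (simp add: pjf_def)
lemma pj_yi: "n + q \<le> x \<Longrightarrow> x < n + 2*q - 1 \<Longrightarrow> pj x = x - q + 1"
proof -
  assume h: "n + q \<le> x" "x < n + 2*q - 1"
  then have "\<not> x < n" "x \<noteq> n" "\<not> x < n + q" using q2 by arith+
  then show ?thesis using h unfolding pjf_def by simp
qed
lemma pj_ylast: "x = n + 2*q - 1 \<Longrightarrow> pj x = (if e then n + 2*q else b)"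
proof -
  assume x: "x = n + 2*q - 1"
  have "\<not> x < n" "x \<noteq> n" "\<not> x < n + q" "\<not> x < n + 2*q - 1" using q2 x by arith+
  then show ?thesis unfolding pjf_def using x by simp
qed
lemma pj_z: "e \<Longrightarrow> pj (n + 2*q) = b"
proof -
  have "\<not> n + 2*q < n" "n + 2*q \<noteq> n" "\<not> n + 2*q < n + q" "\<not> n + 2*q < n + 2*q - 1" "n + 2*q \<noteq> n + 2*q - 1" using q2 by arith+
  then show "e \<Longrightarrow> ?thesis" unfolding pjf_def by simp
qed
lemma pj_out: "x \<ge> N \<Longrightarrow> pj x = x"
proof -
  assume h: "x \<ge> N"
  then have "\<not> x < n" "x \<noteq> n" "\<not> x < n + q" "\<not> x < n + 2*q - 1" "x \<noteq> n + 2*q - 1" "\<not> (e \<and> x = n + 2*q)"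
    using q2 by (auto simp: N_def split: if_splits)
  then show ?thesis unfolding pjf_def by auto
qed

lemma endo_permutes: assumes "finite S" "f ` S \<subseteq> S" "inj_on f S" "\<And>x. x \<notin> S \<Longrightarrow> f x = x"
  shows "f permutes S"
  using assms endo_inj_surj[OF assms(1-3)] by (intro bij_imp_permutes) (auto simp: bij_betw_def)

lemma pj_permutes: "pj permutes V"
proof (rule endo_permutes)
  show "finite V" by simp
  show "pj ` V \<subseteq> V"
  proof
    fix y assume "y \<in> pj ` V"
    then obtain x where "x \<in> V" "y = pj x" by blast
    then show "y \<in> V" using an bn q2 Q_props[of x] by (auto simp: pjf_def N_def)
  qed
  show "\<And>x. x \<notin> V \<Longrightarrow> pj x = x" using q2 by (auto simp: pjf_def N_def)
  show "inj_on pj V"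
  proof (rule inj_on_inverseI)
    let ?Qi = "inv_into ({..<n} - {a}) Q"
    let ?l = "\<lambda>y. if y < n then (if y = b then (if e then n+2*q else n+2*q-1) else ?Qi y)
       else if y = n then n else if y < n + q then y + q - 1 else if y = n + q then a
       else if y < n + 2*q then y - q else if y = n + 2*q then n + 2*q - 1 else y"
    fix x assume x: "x \<in> V"
    have Qi: "x < n \<Longrightarrow> x \<noteq> a \<Longrightarrow> ?Qi (Q x) = x"
      using Qbij by (simp add: bij_betw_def inv_into_f_f)
    show "?l (pj x) = x"
    proof (cases "x < n")
      case True then show ?thesis using Qi Q_props[of x] an bn q2 by (auto simp: pjf_def)
    next
      case F: False
      have xN: "x < n + 2*q + 1" "e \<or> x < n + 2*q" using x by (auto simp: N_def split: if_splits)
      consider "x = n" | "n < x \<and> x < n + q" | "n + q \<le> x \<and> x < n + 2*q - 1" | "x = n + 2*q - 1" | "x = n + 2*q"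
        using F xN by linarith
      then show ?thesis
      proof cases
        case 1 then show ?thesis by (simp add: pjf_def)
      next
        case 2 then show ?thesis using q2 by (simp add: pjf_def)
      next
        case 3
        have v: "pj x = x - q + 1" using 3 q2 by (simp add: pjf_def)
        have "x - q + 1 \<ge> n + 1" "x - q + 1 < n + q" "x - q + 1 + q - 1 = x" using 3 q2 by arith+
        then show ?thesis unfolding v by simp
      next
        case 4 
        have "\<not> n + 2*q < n + q" "\<not> n + 2*q < n" "n + 2*q \<noteq> n" "\<not> n + 2*q < n + 2*q" "n+2*q \<noteq> n + q" using q2 by arith+
        then show ?thesis using 4 bn unfolding pj_ylast[OF 4] by simp
      next
        case 5 
        then have "e" using xN by simp
        have v: "pj x = b" using 5 pj_z[OF \<open>e\<close>] by simp
        show ?thesis unfolding v using 5 bn \<open>e\<close> by simp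
      qed
    qed
  qed
qed

end



context C begin

lemma P_lt: "x < n \<Longrightarrow> P i x < n"
  using permutes_in_image[OF Pperm[of i]] by simp

lemma N_ge: "n + 2*q \<le> N" by (simp add: N_def)

lemma pk_old: "x < n \<Longrightarrow> pk x = P k x" by (simp add: pkf_def)
lemma pk_w: "n \<le> x \<Longrightarrow> x < n + q \<Longrightarrow> pk x = n + ((x - n + 1) mod q)" by (simp add: pkf_def)
lemma pk_out: "n + q \<le> x \<Longrightarrow> pk x = x" by (simp add: pkf_def)

lemma mod_suc_inj: "i < q \<Longrightarrow> i' < q \<Longrightarrow> (i + 1) mod q = (i' + 1) mod q \<Longrightarrow> i = i'"
  by (auto simp: mod_if split: if_splits)

lemma pk_permutes: "pk permutes V"
proof (rule endo_permutes)
  show "finite V" by simp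
  show "pk ` V \<subseteq> V"
  proof
    fix y assume "y \<in> pk ` V"
    then obtain x where x: "x \<in> V" "y = pk x" by blast
    have "Suc (x - n) mod q < q" using q2 by simp
    then have "pk x < n + q \<or> pk x = x" using P_lt[of x k] by (auto simp: pkf_def)
    then show "y \<in> V" using x N_ge by auto
  qed
  show "\<And>x. x \<notin> V \<Longrightarrow> pk x = x" using q2 by (auto simp: pkf_def N_def)
  show "inj_on pk V"
  proof (rule inj_onI)
    fix x y assume xy: "x \<in> V" "y \<in> V" "pk x = pk y"
    have iP: "inj (P k)" using Pperm[of k] by (simp add: permutes_inj)
    have m1: "(x - n + 1) mod q < q" "(y - n + 1) mod q < q" using q2 by simp_all
    show "x = y"
    proof (cases "x < n")
      case True
      then have "pk x < n" using P_lt pk_old by simp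
      then have "y < n" using xy(3) m1 by (auto simp: pkf_def split: if_splits)
      then show ?thesis using True xy(3) iP by (simp add: pkf_def inj_eq)
    next
      case xn: False
      show ?thesis
      proof (cases "x < n + q")
        case True
        then have "n \<le> pk x \<and> pk x < n + q" using xn m1 by (simp add: pkf_def)
        then have y: "n \<le> y \<and> y < n + q" using xy(3) P_lt[of y k] by (auto simp: pkf_def split: if_splits)
        then have "(x - n + 1) mod q = (y - n + 1) mod q" using xy(3) True xn by (simp add: pkf_def)
        moreover have "x - n < q" "y - n < q" using True y xn by arith+
        ultimately have "x - n = y - n" using mod_suc_inj[of "x - n" "y - n"] by blast
        then show ?thesis using xn y by arith
      next
        case False
        then have "pk x = x" by (simp add: pkf_def)
        then have "n + q \<le> y" using xy(3) False xn m1 P_lt[of y k] by (auto simp: pkf_def split: if_splits)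
        then show ?thesis using xy(3) False by (simp add: pkf_def)
      qed
    qed
  qed
qed

lemma po_permutes: "pof n (P i) permutes V"
proof (rule endo_permutes)
  show "finite V" by simp
  show "pof n (P i) ` V \<subseteq> V"
  proof
    fix y assume "y \<in> pof n (P i) ` V"
    then obtain x where x: "x \<in> V" "y = pof n (P i) x" by blast
    then have "y < n \<or> y = x" using P_lt[of x i] by (auto simp: pof_def)
    then show "y \<in> V" using x N_ge by auto
  qed
  show "\<And>x. x \<notin> V \<Longrightarrow> pof n (P i) x = x" by (auto simp: pof_def N_def)
  show "inj_on (pof n (P i)) V"
  proof (rule inj_onI)
    fix x y assume xy: "x \<in> V" "y \<in> V" "pof n (P i) x = pof n (P i) y"
    have iP: "inj (P i)" using Pperm[of i] by (simp add: permutes_inj)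
    then show "x = y" using xy P_lt[of x i] P_lt[of y i] by (auto simp: pof_def inj_eq split: if_splits)
  qed
qed

lemma pi_permutes: "pi i permutes V"
  using pj_permutes pk_permutes po_permutes by (simp add: pi_def)

lemma pk_pow: "(pk ^^ t) x = (if x < n then (P k ^^ t) x else if x < n + q then n + ((x - n + t) mod q) else x)"
proof (induct t)
  case 0 then show ?case by simp
next
  case (Suc t)
  have Pt: "x < n \<Longrightarrow> (P k ^^ t) x < n"
    by (induct t) (simp_all add: P_lt)
  show ?case
  proof (cases "x < n")
    case True then show ?thesis using Suc Pt by (simp add: pkf_def)
  next
    case xn: False
    show ?thesis
    proof (cases "x < n + q")
      case True
      have "(x - n + t) mod q < q" using q2 by simp
      then have "pk (n + ((x - n + t) mod q)) = n + (((x - n + t) mod q + 1) mod q)" by (simp add: pkf_def)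
      also have "\<dots> = n + ((x - n + Suc t) mod q)" by (simp add: mod_Suc_eq)
      finally show ?thesis using Suc xn True by simp
    next
      case False then show ?thesis using Suc xn by (simp add: pkf_def)
    qed
  qed
qed

definition g :: "nat \<Rightarrow> nat" where "g = pk ^^ (q - 1)"

lemma g_val: "g x = (if n \<le> x \<and> x < n + q then n + ((x - n + (q - 1)) mod q) else x)"
  using Pk unfolding g_def pk_pow by auto

lemma g_moves: "n \<le> x \<Longrightarrow> x < n + q \<Longrightarrow> g x \<noteq> x"
proof -
  assume h: "n \<le> x" "x < n + q"
  have "(x - n + (q - 1)) mod q \<noteq> x - n"
  proof (cases "x - n = 0")
    case True then show ?thesis using q2 by simp
  next
    case False
    then have "(x - n + (q - 1)) = (x - n - 1) + 1 * q" using q2 by simp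
    then have "(x - n + (q - 1)) mod q = x - n - 1" using h by (metis mod_mult_self1 mod_less less_imp_diff_less add_less_cancel_left le_add_diff_inverse)
    then show ?thesis using False by simp
  qed
  then show ?thesis using h g_val by auto
qed

lemma g_n: "g n = n + q - 1"
  using g_val[of n] q2 by simp

definition Yg :: "(nat, nat) lgraph" where
  "Yg = \<lparr>verts = V, arcs = {..<N*r}, tail = \<lambda>x. x div r, head = \<lambda>x. pi (x mod r) (x div r), lab = \<lambda>x. x mod r\<rparr>"

lemma r0: "r > 0" using r2 by simp

lemma arc_the: assumes "u \<in> V" "i < r"
  shows "(THE x. x \<in> arcs Yg \<and> tail Yg x = u \<and> lab Yg x = i) = u * r + i"
proof (rule the_equality)
  have "u * r + i < (u + 1) * r" using assms by simp
  also have "\<dots> \<le> N * r" using assms by (intro mult_right_mono) auto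
  finally show "u * r + i \<in> arcs Yg \<and> tail Yg (u * r + i) = u \<and> lab Yg (u * r + i) = i"
    using assms by (simp add: Yg_def)
  fix x assume "x \<in> arcs Yg \<and> tail Yg x = u \<and> lab Yg x = i"
  then show "x = u * r + i" by (simp add: Yg_def) (metis div_mult_mod_eq add.commute mult.commute)
qed

lemma gen_perm_Yg: "i < r \<Longrightarrow> gen_perm Yg i = restrict (pi i) V"
proof
  fix u assume i: "i < r"
  show "gen_perm Yg i u = restrict (pi i) V u"
  proof (cases "u \<in> V")
    case True
    then show ?thesis using arc_the[OF True i] i by (simp add: gen_perm_def Yg_def)
  next
    case False then show ?thesis by (simp add: gen_perm_def Yg_def)
  qed
qed

end



context C begin

lemma arc_lt: "u < N \<Longrightarrow> i < r \<Longrightarrow> u * r + i < N * r"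
proof -
  assume h: "u < N" "i < r"
  have "u * r + i < (u + 1) * r" using h by simp
  also have "\<dots> \<le> N * r" using h by (intro mult_right_mono) auto
  finally show ?thesis .
qed

lemma arc_decomp: "x = x div r * r + x mod r"
  by simp

lemma div_lt: "x < N * r \<Longrightarrow> x div r < N"
  by (simp add: less_mult_imp_div_less)

lemma wf_Yg: "wf_lgraph r Yg"
  unfolding wf_lgraph_def Yg_def using div_lt permutes_in_image[OF pi_permutes] r0 by simp

lemma fin_Yg: "finite_lgraph Yg"
  by (simp add: finite_lgraph_def Yg_def)

lemma cov_Yg: "covering r Yg"
  unfolding covering_def
proof (intro ballI allI impI conjI)
  fix v i assume v: "v \<in> verts Yg" and i: "i < r"
  have vN: "v < N" using v by (simp add: Yg_def)
  show "\<exists>!x. x \<in> arcs Yg \<and> tail Yg x = v \<and> lab Yg x = i"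
  proof
    show "v * r + i \<in> arcs Yg \<and> tail Yg (v * r + i) = v \<and> lab Yg (v * r + i) = i"
      using arc_lt[OF vN i] i by (simp add: Yg_def)
    fix x assume "x \<in> arcs Yg \<and> tail Yg x = v \<and> lab Yg x = i"
    then show "x = v * r + i" using arc_decomp[of x] by (simp add: Yg_def)
  qed
  let ?w = "pinv (pi i) v"
  have pw: "pi i ?w = v" using pi_permutes[of i] by (simp add: permutes_inverses(1))
  have ip: "pinv (pi i) permutes V" by (rule permutes_inv[OF pi_permutes])
  have wN: "?w < N" using vN permutes_in_image[OF ip, of v] by simp
  show "\<exists>!x. x \<in> arcs Yg \<and> head Yg x = v \<and> lab Yg x = i"
  proof
    show "?w * r + i \<in> arcs Yg \<and> head Yg (?w * r + i) = v \<and> lab Yg (?w * r + i) = i"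
      using arc_lt[OF wN i] i pw by (simp add: Yg_def)
    fix x assume x: "x \<in> arcs Yg \<and> head Yg x = v \<and> lab Yg x = i"
    have hx: "head Yg x = pi (x mod r) (x div r)" "lab Yg x = x mod r" by (simp_all add: Yg_def)
    have "x mod r = i" using x hx(2) by simp
    moreover have "pi (x mod r) (x div r) = v" using x hx(1) by simp
    ultimately have "pi i (x div r) = pi i ?w" "x mod r = i" using pw by simp_all
    then have "x div r = ?w" using pi_permutes[of i] by (metis permutes_inj injD)
    then show "x = ?w * r + i" using arc_decomp[of x] \<open>x mod r = i\<close> by simp
  qed
qed

lemma adj_step: assumes "u \<in> V" "i < r"
  shows "(u, pi i u) \<in> adj Yg" "(pi i u, u) \<in> adj Yg"
proof -
  let ?x = "u * r + i"
  have h: "?x \<in> arcs Yg" "tail Yg ?x = u" "head Yg ?x = pi i u"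
    using arc_lt[of u i] assms by (simp_all add: Yg_def)
  have "(tail Yg ?x, head Yg ?x) \<in> adj Yg" "(head Yg ?x, tail Yg ?x) \<in> adj Yg"
    unfolding adj_def using h(1) by blast+
  then show "(u, pi i u) \<in> adj Yg" "(pi i u, u) \<in> adj Yg" using h(2,3) by simp_all
qed

lemma pij: "pi j = pj" by (simp add: pi_def)
lemma pik: "pi k = pk" using jk by (simp add: pi_def)

lemma reach_n:
  assumes old: "\<And>x. x < n \<Longrightarrow> (a, x) \<in> (adj Yg)\<^sup>*"
  shows "v \<in> V \<Longrightarrow> (n, v) \<in> (adj Yg)\<^sup>*"
proof -
  have NV: "n + 2*q \<le> N" by (rule N_ge)
  have xs: "i < q \<Longrightarrow> (n, n + i) \<in> (adj Yg)\<^sup>*" for i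
  proof (induct i)
    case 0 then show ?case by simp
  next
    case (Suc i)
    have "pk (n + i) = n + Suc i" using Suc(2) by (simp add: pkf_def)
    then have "(n + i, n + Suc i) \<in> adj Yg" using adj_step(1)[of "n+i" k] kr pik Suc(2) NV by simp
    moreover have "(n, n + i) \<in> (adj Yg)\<^sup>*" using Suc by simp
    ultimately show ?case by (rule rtrancl_into_rtrancl[rotated])
  qed
  have ys: "i < q \<Longrightarrow> (n, n + q + i) \<in> (adj Yg)\<^sup>*" for i
  proof (cases "i = 0")
    case True
    have "pj (n + q) = n + 1" using pj_yi[of "n+q"] q2 by simp
    then have "(n + 1, n + q) \<in> adj Yg" using adj_step(2)[of "n+q" j] jr pij NV q2 by simp
    then show ?thesis using xs[of 1] q2 True by simp
  next
    case False
    assume iq: "i < q"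
    have "pj (n + i) = n + q + i" using pj_xi[of "n+i"] iq False by simp
    then have "(n + i, n + q + i) \<in> adj Yg" using adj_step(1)[of "n+i" j] jr pij NV iq by simp
    with xs[OF iq] show ?thesis by (rule rtrancl_into_rtrancl)
  qed
  have na: "(n, a) \<in> (adj Yg)\<^sup>*"
  proof -
    have "(n + q, a) \<in> adj Yg" using adj_step(2)[of a j] jr pij pj_a an NV by simp
    moreover have "(n, n + q) \<in> (adj Yg)\<^sup>*" using ys[of 0] q2 by simp
    ultimately show ?thesis by (rule rtrancl_into_rtrancl[rotated])
  qed
  assume v: "v \<in> V"
  have vN: "v < n + 2*q + (if e then 1 else 0)" using v by (simp add: N_def)
  have "v < n \<or> (n \<le> v \<and> v < n + q) \<or> (n + q \<le> v \<and> v < n + 2*q) \<or> (v = n + 2*q \<and> e)"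
    using vN by (cases e) auto
  then consider "v < n" | "n \<le> v \<and> v < n + q" | "n + q \<le> v \<and> v < n + 2*q" | "v = n + 2*q" "e"
    by blast
  then show ?thesis
  proof cases
    case 1 then show ?thesis using na old by (meson rtrancl_trans)
  next
    case 2
    then have "v - n < q" "n + (v - n) = v" by arith+
    then show ?thesis using xs[of "v - n"] by simp
  next
    case 3
    then have "v - n - q < q" "n + q + (v - n - q) = v" by arith+
    then show ?thesis using ys[of "v - n - q"] by simp
  next
    case 4
    have "pj (n + 2*q - 1) = n + 2*q" using pj_ylast 4 by simp
    moreover have "n + 2*q - 1 = n + q + (q - 1)" using q2 by simp
    ultimately have "(n + q + (q - 1), n + 2*q) \<in> adj Yg" using adj_step(1)[of "n + q + (q - 1)" j] jr pij NV q2 by simp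
    moreover have "(n, n + q + (q - 1)) \<in> (adj Yg)\<^sup>*" using ys[of "q - 1"] q2 by simp
    ultimately show ?thesis using 4 by (metis rtrancl_into_rtrancl)
  qed
qed

lemma adj_sym: "(x, y) \<in> adj Yg \<Longrightarrow> (y, x) \<in> adj Yg"
  unfolding adj_def by blast

lemma rtr_sym: "(x, y) \<in> (adj Yg)\<^sup>* \<Longrightarrow> (y, x) \<in> (adj Yg)\<^sup>*"
  by (induct rule: rtrancl_induct) (auto intro: adj_sym rtrancl_trans[OF r_into_rtrancl])

lemma conn_Yg:
  assumes "\<And>v. v \<in> V \<Longrightarrow> (n, v) \<in> (adj Yg)\<^sup>*"
  shows "connected_lgraph Yg"
  unfolding connected_lgraph_def
proof (intro ballI)
  fix u v assume "u \<in> verts Yg" "v \<in> verts Yg"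
  then have "(n, u) \<in> (adj Yg)\<^sup>*" "(n, v) \<in> (adj Yg)\<^sup>*" using assms by (simp_all add: Yg_def)
  then show "(u, v) \<in> (adj Yg)\<^sup>*" using rtr_sym rtrancl_trans by metis
qed

end



context pg begin
lemma A3_triple: assumes "inH (cyc3 a b c)" "distinct [a,b,c]" shows "A3 {a,b,c}"
proof -
  have 1: "inH (cyc3 b c a)" "inH (cyc3 c a b)" using assms cyc3_rot[of a b c] cyc3_rot[of b c a] by auto
  have 2: "inH (cyc3 a c b)" using cyc3_inH_sq[OF assms] .
  have 3: "inH (cyc3 c b a)" "inH (cyc3 b a c)" using 2 assms cyc3_rot[of a c b] cyc3_rot[of c b a] by auto
  show ?thesis unfolding A3_def using assms(1) 1 2 3 by auto
qed
end

lemma restrict_Bij: "p permutes V \<Longrightarrow> restrict p V \<in> Bij V"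
  unfolding Bij_def by (auto intro: bij_betw_cong[THEN iffD1, OF _ permutes_imp_bij])

context C begin

lemma mono_Yg:
  assumes reach: "\<And>v. v \<in> V \<Longrightarrow> (n, v) \<in> (adj Yg)\<^sup>*" and odd: "\<not> evenperm pj"
  shows "monodromy_image r Yg = carrier (BijGroup (verts Yg))"
proof -
  have vY: "verts Yg = V" by (simp add: Yg_def)
  define H where "H = generate (BijGroup V) ((\<lambda>i. restrict (pi i) V) ` {..<r})"
  have mon: "monodromy_image r Yg = H"
    unfolding monodromy_image_def H_def vY using gen_perm_Yg by (intro arg_cong[where f="generate _"]) auto
  have gensub: "(\<lambda>i. restrict (pi i) V) ` {..<r} \<subseteq> carrier (BijGroup V)"
    using restrict_Bij[OF pi_permutes] by (auto simp: BijGroup_def)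
  have sg: "subgroup H (BijGroup V)" unfolding H_def
    by (rule group.generate_is_subgroup[OF group_BijGroup gensub])
  interpret P: pg V H using sg by (simp add: pg_def)
  have inpi: "P.inH (pi i)" if "i < r" for i
  proof -
    have "restrict (pi i) V \<in> H" unfolding H_def using that by (auto intro: generate.incl)
    then show ?thesis by (simp add: P.inH_def)
  qed
  have gP: "g permutes V" unfolding g_def by (rule permutes_funpow[OF pk_permutes])
  have gH: "P.inH g" unfolding g_def using P.inH_funpow inpi[OF kr] pik by simp
  have pjP: "pj permutes V" by (rule pj_permutes)
  have pjH: "P.inH pj" using inpi[OF jr] pij by simp
  define h where "h = pj \<circ> g \<circ> pinv pj"
  have hP: "h permutes V" unfolding h_def using gP pjP by (simp add: permutes_compose permutes_inv)
  have hH: "P.inH h" unfolding h_def by (rule P.inH_conj[OF pjH pjP gH])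
  have pjinv: "pinv pj y = x" if "pj x = y" for x y using permutes_inv_eq[OF pjP] that by simp
  have gn: "g n = n + q - 1" by (rule g_n)
  have hn: "h n = n + 2*q - 1"
  proof -
    have "pinv pj n = n" using pjinv[of n n] pj_x0 by blast
    moreover have "pj (n + q - 1) = n + q - 1 + q" using pj_xi[of "n + q - 1"] q2 by simp
    ultimately show ?thesis unfolding h_def using gn q2 by simp
  qed
  have sep: "g y = y \<or> h y = y" if "y \<noteq> n" for y
  proof (cases "g y = y")
    case False
    then have y: "n < y" "y < n + q" using g_val[of y] that by (auto split: if_splits)
    have "pj (y + q - 1) = y" using pj_yi[of "y + q - 1"] y q2 by simp
    then have w: "pinv pj y = y + q - 1" by (rule pjinv)
    have "\<not> (y + q - 1 < n + q)" using y q2 by arith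
    then have "g (y + q - 1) = y + q - 1" using g_val[of "y + q - 1"] by simp
    then have "h y = y" unfolding h_def using w \<open>pj (y + q - 1) = y\<close> by simp
    then show ?thesis by simp
  qed simp
  have comm: "g \<circ> h \<circ> pinv g \<circ> pinv h = cyc3 n (n + q - 1) (n + 2*q - 1)"
    using commutator_cyc3[OF permutes_bij[OF gP] permutes_bij[OF hP], of n] g_moves[of n] hn gn q2 sep
    by simp
  have cH: "P.inH (cyc3 n (n + q - 1) (n + 2*q - 1))"
    unfolding comm[symmetric] using gH hH gP hP by (intro P.inH_comp P.inH_inv) auto
  have dist: "distinct [n, n + q - 1, n + 2*q - 1]" using q2 by auto
  have A0: "P.A3 {n, n + q - 1, n + 2*q - 1}" by (rule P.A3_triple[OF cH dist])
  have S0V: "{n, n + q - 1, n + 2*q - 1} \<subseteq> V" using N_ge q2 by auto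
  have A3V: "P.A3 V"
  proof (rule P.grow[OF A0 S0V, where G="pi ` {..<r}"])
    show "\<And>f. f \<in> pi ` {..<r} \<Longrightarrow> P.inH f \<and> f permutes V" using inpi pi_permutes by auto
    show "\<exists>u v. u \<in> {n, n + q - 1, n + 2*q - 1} \<and> v \<in> {n, n + q - 1, n + 2*q - 1} \<and>
              f u \<in> {n, n + q - 1, n + 2*q - 1} \<and> f v \<in> {n, n + q - 1, n + 2*q - 1} \<and> u \<noteq> v"
      if fG: "f \<in> pi ` {..<r}" for f
    proof -
      obtain i where i: "i < r" "f = pi i" using fG by auto
      show ?thesis
      proof (cases "i = j")
        case True
        have "pj (n + q - 1) = n + 2*q - 1" using pj_xi[of "n + q - 1"] q2 by simp
        then show ?thesis using True i pij pj_x0 dist by (intro exI[of _ n] exI[of _ "n + q - 1"]) auto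
      next
        case nj: False
        show ?thesis
        proof (cases "i = k")
          case True
          have "pk (n + q - 1) = n" using pk_w[of "n + q - 1"] q2 by simp
          moreover have "pk (n + 2*q - 1) = n + 2*q - 1" using pk_out[of "n + 2*q - 1"] q2 by simp
          ultimately show ?thesis using True i pik dist
            by (intro exI[of _ "n + 2*q - 1"] exI[of _ "n + q - 1"]) auto
        next
          case False
          then have "f = pof n (P i)" using i nj by (simp add: pi_def)
          then show ?thesis using dist by (intro exI[of _ n] exI[of _ "n + q - 1"]) (auto simp: pof_def)
        qed
      qed
    qed
    show "T = V" if T: "{n, n + q - 1, n + 2*q - 1} \<subseteq> T" "T \<subseteq> V" "\<And>f. f \<in> pi ` {..<r} \<Longrightarrow> f ` T \<subseteq> T" for T
    proof
      show "T \<subseteq> V" by (rule T(2))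
      have fT: "finite T" using T(2) finite_subset by blast
      have clo: "y \<in> T" if xy: "(x, y) \<in> adj Yg" "x \<in> T" for x y
      proof -
        obtain ed where ed: "ed \<in> arcs Yg" "(x = tail Yg ed \<and> y = head Yg ed) \<or> (y = tail Yg ed \<and> x = head Yg ed)"
          using xy(1) unfolding adj_def by blast
        define i where "i = ed mod r"
        have ir: "i < r" using r0 by (simp add: i_def)
        have tl: "tail Yg ed \<in> V" using ed(1) div_lt by (simp add: Yg_def)
        have hd: "head Yg ed = pi i (tail Yg ed)" by (simp add: Yg_def i_def)
        have im: "pi i ` T \<subseteq> T" using T(3)[of "pi i"] ir by auto
        have inj: "inj_on (pi i) T" using pi_permutes[of i] by (meson permutes_inj inj_on_subset subset_UNIV)
        have eq: "pi i ` T = T" using endo_inj_surj[OF fT im inj] .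
        from ed(2) show "y \<in> T"
        proof
          assume "x = tail Yg ed \<and> y = head Yg ed"
          then show "y \<in> T" using hd im xy(2) by auto
        next
          assume a: "y = tail Yg ed \<and> x = head Yg ed"
          then have "pi i y \<in> T" using hd xy(2) by simp
          then obtain t where "t \<in> T" "pi i t = pi i y" using eq by (metis imageE)
          then show "y \<in> T" using pi_permutes[of i] by (metis permutes_inj injD)
        qed
      qed
      show "V \<subseteq> T"
      proof
        fix v assume "v \<in> V"
        then have "(n, v) \<in> (adj Yg)\<^sup>*" by (rule reach)
        then show "v \<in> T"
        proof (induct rule: rtrancl_induct)
          case base then show ?case using T(1) by simp
        next
          case (step y z) then show ?case using clo by blast
        qed
      qed
    qed
  qed
  have all: "P.inH p" if "p permutes V" for p
    by (rule P.all_inH[OF A3V pjH pjP odd that])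
  have "carrier (BijGroup V) \<subseteq> H" by (rule P.H_full[OF all])
  moreover have "H \<subseteq> carrier (BijGroup V)" using subgroup.subset[OF sg] .
  ultimately show ?thesis using mon vY by auto
qed

end




lemma ext_bij:
  assumes fA: "finite A" and fB: "finite B" and c: "card A = card B" and D: "D \<subseteq> A"
    and inj: "inj_on s D" and sD: "s ` D \<subseteq> B"
  shows "\<exists>Q. bij_betw Q A B \<and> (\<forall>x\<in>D. Q x = s x)"
proof -
  have fD: "finite D" using D fA finite_subset by blast
  have "card (A - D) = card (B - s ` D)"
    using c D sD card_image[OF inj] fD by (simp add: card_Diff_subset finite_imageI)
  then obtain h where h: "bij_betw h (A - D) (B - s ` D)"
    using finite_same_card_bij[of "A - D" "B - s ` D"] fA fB by auto
  let ?Q = "\<lambda>x. if x \<in> D then s x else h x"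
  have b1: "bij_betw ?Q D (s ` D)" using inj by (simp add: bij_betw_def inj_on_def)
  have b2: "bij_betw ?Q (A - D) (B - s ` D)" using h by (rule bij_betw_cong[THEN iffD1, rotated]) auto
  have "bij_betw ?Q (D \<union> (A - D)) (s ` D \<union> (B - s ` D))"
    by (rule bij_betw_combine[OF b1 b2]) auto
  moreover have "D \<union> (A - D) = A" "s ` D \<union> (B - s ` D) = B" using D sD by auto
  ultimately show ?thesis by (intro exI[of _ ?Q]) auto
qed

lemma emb_adj:
  assumes "subgraph_embedding Z Y fv fe" "(u, v) \<in> adj Z"
  shows "(fv u, fv v) \<in> adj Y"
proof -
  obtain ed where ed: "ed \<in> arcs Z" "(u = tail Z ed \<and> v = head Z ed) \<or> (v = tail Z ed \<and> u = head Z ed)"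
    using assms(2) unfolding adj_def by blast
  have f: "fe ed \<in> arcs Y" "tail Y (fe ed) = fv (tail Z ed)" "head Y (fe ed) = fv (head Z ed)"
    using assms(1) ed(1) unfolding subgraph_embedding_def by auto
  have "(tail Y (fe ed), head Y (fe ed)) \<in> adj Y" "(head Y (fe ed), tail Y (fe ed)) \<in> adj Y"
    unfolding adj_def using f(1) by blast+
  then show ?thesis using ed(2) f(2,3) by auto
qed

lemma emb_rtrancl:
  assumes "subgraph_embedding Z Y fv fe" "(u, v) \<in> (adj Z)\<^sup>*"
  shows "(fv u, fv v) \<in> (adj Y)\<^sup>*"
  using assms(2)
proof (induct rule: rtrancl_induct)
  case base then show ?case by simp
next
  case (step y z) then show ?case using emb_adj[OF assms(1)] by (meson rtrancl.rtrancl_into_rtrancl)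
qed


lemma card_miss: "X \<subseteq> {..<n} \<Longrightarrow> card X < n \<Longrightarrow> \<exists>x<(n::nat). x \<notin> X"
proof (rule ccontr)
  assume "X \<subseteq> {..<n}" "card X < n" "\<not> (\<exists>x<n. x \<notin> X)"
  then have "X = {..<n}" by auto
  then show False using \<open>card X < n\<close> by simp
qed

theorem lemma3p4:
  fixes r :: nat and Z :: "('v, 'e) lgraph"
  assumes "r \<ge> 2"
    and "wf_lgraph r Z"
    and "finite_lgraph Z"
    and "verts Z \<noteq> {}"
    and "connected_lgraph Z"
    and "immersion r Z"
    and "\<not> covering r Z"
  shows "\<exists>(Y :: (nat, nat) lgraph) fv fe.
           wf_lgraph r Y \<and> finite_lgraph Y \<and> connected_lgraph Y \<and> covering r Y \<and>
           subgraph_embedding Z Y fv fe \<and>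
           monodromy_image r Y = carrier (BijGroup (verts Y))"
proof -
  note r2 = assms(1)
  have r0: "r > 0" using r2 by simp
  let ?VZ = "verts Z"
  define n where "n = card ?VZ"
  have fVZ: "finite ?VZ" using assms(3) by (simp add: finite_lgraph_def)
  have n1: "n \<ge> 1" using assms(4) fVZ unfolding n_def by (simp add: Suc_leI card_gt_0_iff)
  obtain hh where hh: "bij_betw hh {0..<n} ?VZ" using ex_bij_betw_nat_finite[OF fVZ] n_def by auto
  define idx where "idx = inv_into {0..<n} hh"
  have idxb: "bij_betw idx ?VZ {..<n}" using bij_betw_inv_into[OF hh] idx_def by (simp add: atLeast0LessThan)
  have idx_lt: "\<And>v. v \<in> ?VZ \<Longrightarrow> idx v < n" using idxb by (auto simp: bij_betw_def)
  have idx_inj: "\<And>u v. u \<in> ?VZ \<Longrightarrow> v \<in> ?VZ \<Longrightarrow> idx u = idx v \<Longrightarrow> u = v"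
    using idxb by (auto simp: bij_betw_def inj_on_def)
  have idx_surj: "\<exists>v\<in>?VZ. idx v = x" if "x < n" for x
  proof -
    have "x \<in> idx ` ?VZ" using idxb that by (simp add: bij_betw_def)
    then show ?thesis by blast
  qed
  have wfZ: "\<And>ed. ed \<in> arcs Z \<Longrightarrow> tail Z ed \<in> ?VZ \<and> head Z ed \<in> ?VZ \<and> lab Z ed < r"
    using assms(2) by (simp add: wf_lgraph_def)
  have imm_out: "\<And>e1 e2. e1 \<in> arcs Z \<Longrightarrow> e2 \<in> arcs Z \<Longrightarrow> tail Z e1 = tail Z e2 \<Longrightarrow> lab Z e1 = lab Z e2 \<Longrightarrow> e1 = e2"
    using assms(6) wfZ unfolding immersion_def by metis
  have imm_in: "\<And>e1 e2. e1 \<in> arcs Z \<Longrightarrow> e2 \<in> arcs Z \<Longrightarrow> head Z e1 = head Z e2 \<Longrightarrow> lab Z e1 = lab Z e2 \<Longrightarrow> e1 = e2"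
    using assms(6) wfZ unfolding immersion_def by metis
  define Ds where "Ds i = (\<lambda>ed. idx (tail Z ed)) ` {ed \<in> arcs Z. lab Z ed = i}" for i
  define s where "s i x = idx (head Z (THE ed. ed \<in> arcs Z \<and> lab Z ed = i \<and> idx (tail Z ed) = x))" for i x
  have s_ed: "s (lab Z ed) (idx (tail Z ed)) = idx (head Z ed)" if ed: "ed \<in> arcs Z" for ed
  proof -
    have "(THE ed'. ed' \<in> arcs Z \<and> lab Z ed' = lab Z ed \<and> idx (tail Z ed') = idx (tail Z ed)) = ed"
    proof (rule the_equality)
      show "ed \<in> arcs Z \<and> lab Z ed = lab Z ed \<and> idx (tail Z ed) = idx (tail Z ed)" using ed by simp
      fix ed' assume h: "ed' \<in> arcs Z \<and> lab Z ed' = lab Z ed \<and> idx (tail Z ed') = idx (tail Z ed)"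
      then have "tail Z ed' = tail Z ed" using idx_inj wfZ ed by blast
      then show "ed' = ed" using imm_out h ed by blast
    qed
    then show ?thesis by (simp add: s_def)
  qed
  have Ds_sub: "Ds i \<subseteq> {..<n}" for i using idx_lt wfZ by (auto simp: Ds_def)
  have sDs: "s i ` Ds i \<subseteq> {..<n}" for i using idx_lt wfZ s_ed by (auto simp: Ds_def)
  have s_inj: "inj_on (s i) (Ds i)" for i
  proof (rule inj_onI)
    fix x y assume "x \<in> Ds i" "y \<in> Ds i" "s i x = s i y"
    then obtain e1 e2 where e: "e1 \<in> arcs Z" "lab Z e1 = i" "x = idx (tail Z e1)"
       "e2 \<in> arcs Z" "lab Z e2 = i" "y = idx (tail Z e2)" "s i x = s i y" by (auto simp: Ds_def)
    then have "idx (head Z e1) = idx (head Z e2)" using s_ed[of e1] s_ed[of e2] by simp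
    then have "head Z e1 = head Z e2" using idx_inj wfZ e by blast
    then have "e1 = e2" using imm_in e by simp
    then show "x = y" using e by simp
  qed
  have card_s: "card (s i ` Ds i) = card (Ds i)" for i using card_image[OF s_inj] .
  obtain j a b where jab: "j < r" "a < n" "b < n" "a \<notin> Ds j" "b \<notin> s j ` Ds j"
  proof -
    obtain v i where vi: "v \<in> ?VZ" "i < r"
      "\<not> ((\<exists>!ed. ed \<in> arcs Z \<and> tail Z ed = v \<and> lab Z ed = i) \<and> (\<exists>!ed. ed \<in> arcs Z \<and> head Z ed = v \<and> lab Z ed = i))"
      using assms(7) unfolding covering_def by blast
    have "\<not> (\<exists>ed. ed \<in> arcs Z \<and> tail Z ed = v \<and> lab Z ed = i) \<or> \<not> (\<exists>ed. ed \<in> arcs Z \<and> head Z ed = v \<and> lab Z ed = i)"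
      using vi(3) imm_out imm_in by metis
    then show ?thesis
    proof
      assume no: "\<not> (\<exists>ed. ed \<in> arcs Z \<and> tail Z ed = v \<and> lab Z ed = i)"
      have aD: "idx v \<notin> Ds i"
      proof
        assume "idx v \<in> Ds i"
        then obtain ed where "ed \<in> arcs Z" "lab Z ed = i" "idx v = idx (tail Z ed)" by (auto simp: Ds_def)
        then show False using no idx_inj[of v "tail Z ed"] vi(1) wfZ by metis
      qed
      have "Ds i \<subseteq> {..<n} - {idx v}" using Ds_sub aD by auto
      then have "card (Ds i) \<le> n - 1" using idx_lt[OF vi(1)] by (metis card_Diff_singleton card_lessThan card_mono finite_Diff finite_lessThan lessThan_iff)
      then have "card (s i ` Ds i) < n" using card_s n1 by simp
      then obtain bb where "bb < n" "bb \<notin> s i ` Ds i" using card_miss[OF sDs] by blast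
      then show ?thesis using that[of i "idx v" bb] vi idx_lt aD by blast
    next
      assume no: "\<not> (\<exists>ed. ed \<in> arcs Z \<and> head Z ed = v \<and> lab Z ed = i)"
      have bD: "idx v \<notin> s i ` Ds i"
      proof
        assume "idx v \<in> s i ` Ds i"
        then obtain ed where "ed \<in> arcs Z" "lab Z ed = i" "idx v = s i (idx (tail Z ed))" by (auto simp: Ds_def)
        then have "ed \<in> arcs Z" "lab Z ed = i" "idx v = idx (head Z ed)" using s_ed by auto
        then show False using no idx_inj[of v "head Z ed"] vi(1) wfZ by metis
      qed
      have "s i ` Ds i \<subseteq> {..<n} - {idx v}" using sDs[of i] bD by blast
      then have "card (s i ` Ds i) \<le> n - 1" using idx_lt[OF vi(1)] by (metis card_Diff_singleton card_lessThan card_mono finite_Diff finite_lessThan lessThan_iff)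
      then have "card (Ds i) < n" using card_s n1 by simp
      then obtain aa where "aa < n" "aa \<notin> Ds i" using card_miss[OF Ds_sub] by blast
      then show ?thesis using that[of i aa "idx v"] vi idx_lt bD by blast
    qed
  qed
  have "\<forall>i. \<exists>Pf. Pf permutes {..<n} \<and> (i \<noteq> j \<longrightarrow> (\<forall>x\<in>Ds i. Pf x = s i x))"
  proof
    fix i
    obtain Q' where Q': "bij_betw Q' {..<n} {..<n}" "\<forall>x\<in>Ds i. Q' x = s i x"
      using ext_bij[OF _ _ _ Ds_sub s_inj sDs] by auto
    let ?Pf = "\<lambda>x. if x < n then Q' x else x"
    have "bij_betw ?Pf {..<n} {..<n}" using Q'(1) by (rule bij_betw_cong[THEN iffD1, rotated]) auto
    then have "?Pf permutes {..<n}" by (rule bij_imp_permutes) auto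
    moreover have "\<forall>x\<in>Ds i. ?Pf x = s i x" using Q'(2) Ds_sub by auto
    ultimately show "\<exists>Pf. Pf permutes {..<n} \<and> (i \<noteq> j \<longrightarrow> (\<forall>x\<in>Ds i. Pf x = s i x))" by blast
  qed
  then obtain P where P: "\<And>i. P i permutes {..<n}" "\<And>i x. i \<noteq> j \<Longrightarrow> x \<in> Ds i \<Longrightarrow> P i x = s i x"
    by metis
  obtain Q where Q: "bij_betw Q ({..<n} - {a}) ({..<n} - {b})" "\<forall>x\<in>Ds j. Q x = s j x"
  proof -
    have "card ({..<n} - {a}) = card ({..<n} - {b})" using jab by simp
    moreover have "Ds j \<subseteq> {..<n} - {a}" using Ds_sub[of j] jab by blast
    moreover have "s j ` Ds j \<subseteq> {..<n} - {b}" using sDs[of j] jab by blast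
    ultimately show ?thesis using ext_bij[of "{..<n} - {a}" "{..<n} - {b}" "Ds j" "s j"] s_inj that by auto
  qed
  define k where "k = (if j = 0 then 1 else 0 :: nat)"
  have kr: "k < r" "k \<noteq> j" using r2 by (auto simp: k_def)
  have "permutation (P k)" using P(1)[of k] permutation_permutes by blast
  then obtain m where m: "(P k ^^ m) = id" "m > 0" by (rule permutation_is_nilpotent)
  define q where "q = m + 1"
  have q2: "q \<ge> 2" using m(2) by (simp add: q_def)
  have Pq: "(P k ^^ (q - 1)) = id" using m(1) by (simp add: q_def)
  define e where "e = evenperm (pjf n q a b Q False)"
  interpret C n r j k a b q e P Q
    using r2 jab kr q2 P(1) Pq Q(1) by (unfold_locales; auto)
  interpret C0: C n r j k a b q False P Q
    using r2 jab kr q2 P(1) Pq Q(1) by (unfold_locales; auto)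
  have odd: "\<not> evenperm pj"
  proof (cases e)
    case True
    have "pjf n q a b Q True = Transposition.transpose b (n + 2*q) \<circ> pjf n q a b Q False"
      using pjf_parity[of q b n a Q] q2 jab Q_props by auto
    moreover have "permutation (pjf n q a b Q False)"
      using C0.pj_permutes permutation_permutes by blast
    moreover have "b \<noteq> n + 2*q" using jab by simp
    ultimately have "evenperm (pjf n q a b Q True) = (\<not> evenperm (pjf n q a b Q False))"
      using evenperm_comp[OF permutation_swap_id, of "pjf n q a b Q False" b "n + 2*q"] evenperm_swap[of b "n + 2*q"] by simp
    then show ?thesis using True e_def by simp
  next
    case False then show ?thesis using e_def by simp
  qed
  have pi_old: "pi i x = P i x" if "i \<noteq> j" "x < n" for i x
    using that pk_old by (auto simp: pi_def pof_def)
  define fe where "fe ed = idx (tail Z ed) * r + lab Z ed" for ed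
  have fe_div: "fe ed div r = idx (tail Z ed)" "fe ed mod r = lab Z ed" if "ed \<in> arcs Z" for ed
    using wfZ[OF that] r0 by (simp_all add: fe_def)
  have emb: "subgraph_embedding Z Yg idx fe"
    unfolding subgraph_embedding_def
  proof (intro conjI ballI)
    show "inj_on idx ?VZ" using idxb by (simp add: bij_betw_def)
    show "inj_on fe (arcs Z)"
    proof (rule inj_onI)
      fix e1 e2 assume h: "e1 \<in> arcs Z" "e2 \<in> arcs Z" "fe e1 = fe e2"
      then have "idx (tail Z e1) = idx (tail Z e2)" "lab Z e1 = lab Z e2" using fe_div by metis+
      then have "tail Z e1 = tail Z e2" "lab Z e1 = lab Z e2" using idx_inj wfZ h by blast+
      then show "e1 = e2" using imm_out h by blast
    qed
    show "idx ` ?VZ \<subseteq> verts Yg" using idx_lt N_ge by (force simp: Yg_def)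
    show "fe ` arcs Z \<subseteq> arcs Yg"
    proof
      fix x assume "x \<in> fe ` arcs Z"
      then obtain ed where ed: "ed \<in> arcs Z" "x = fe ed" by blast
      have "idx (tail Z ed) < N" using idx_lt wfZ[OF ed(1)] N_ge by (meson less_le_trans le_add1 order_trans)
      then show "x \<in> arcs Yg" using arc_lt[of "idx (tail Z ed)" "lab Z ed"] wfZ[OF ed(1)] ed(2) by (simp add: Yg_def fe_def)
    qed
    fix ed assume ed: "ed \<in> arcs Z"
    show "tail Yg (fe ed) = idx (tail Z ed)" using fe_div[OF ed] by (simp add: Yg_def)
    show "lab Yg (fe ed) = lab Z ed" using fe_div[OF ed] by (simp add: Yg_def)
    have xD: "idx (tail Z ed) \<in> Ds (lab Z ed)" using ed by (auto simp: Ds_def)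
    have xn: "idx (tail Z ed) < n" using idx_lt wfZ ed by blast
    have "pi (lab Z ed) (idx (tail Z ed)) = idx (head Z ed)"
    proof (cases "lab Z ed = j")
      case True
      then have "idx (tail Z ed) \<noteq> a" using xD jab by auto
      then have "pj (idx (tail Z ed)) = s j (idx (tail Z ed))" using pj_old xn Q(2) xD True by simp
      then show ?thesis using True s_ed[OF ed] by (simp add: pi_def)
    next
      case False
      then show ?thesis using pi_old[OF False xn] P(2)[OF False xD] s_ed[OF ed] by simp
    qed
    then show "head Yg (fe ed) = idx (head Z ed)" using fe_div[OF ed] by (simp add: Yg_def)
  qed
  have old: "(a, x) \<in> (adj Yg)\<^sup>*" if xn: "x < n" for x
  proof -
    obtain va where va: "va \<in> ?VZ" "idx va = a" using idx_surj jab by blast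
    obtain vx where vx: "vx \<in> ?VZ" "idx vx = x" using idx_surj xn by blast
    have "(va, vx) \<in> (adj Z)\<^sup>*" using assms(5) va vx unfolding connected_lgraph_def by blast
    then show ?thesis using emb_rtrancl[OF emb] va vx by metis
  qed
  have reach: "\<And>v. v \<in> V \<Longrightarrow> (n, v) \<in> (adj Yg)\<^sup>*" using reach_n[OF old] by blast
  show ?thesis
    using wf_Yg fin_Yg conn_Yg[OF reach] cov_Yg emb mono_Yg[OF reach odd] by blast
qed


end
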